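(* A Tychonoff space $X$ is a nowhere almost $P$-space if and only if no non-isolated point of $X$ is an almost $P$-point.
   Context: $C(X)$ is the ring of real-valued continuous functions on $X$; a zero set is $Z(h)=\{x: h(x)=0\}$ with $h\in C(X)$ and a cozero set is its complement. $T''(X)$ is the set of all functions $f\colon X\to\mathbb{R}$ for which there is a dense cozero set $U$ of $X$ with $f|_U$ continuous. $\chi_A$ is the characteristic function of $A\subseteq X$. $X$ is a nowhere almost $P$-space if $\chi_{\{p\}}\in T''(X)$ for all $p\in X$. A point $p\in X$ is an almost $P$-point if every non-empty $G_\delta$-set (equivalently, for Tychonoff $X$, every zero set) containing $p$ has non-empty interior. *)

theory Defs
  imports "HOL-Analysis.Analysis"
begin

definition tychonoff_space :: "'a topology \<Rightarrow> bool" where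
  "tychonoff_space X \<longleftrightarrow> completely_regular_space X \<and> Hausdorff_space X"

definition zero_set :: "'a topology \<Rightarrow> ('a \<Rightarrow> real) \<Rightarrow> 'a set" where
  "zero_set X h = {x \<in> topspace X. h x = 0}"

definition cozero_set :: "'a topology \<Rightarrow> ('a \<Rightarrow> real) \<Rightarrow> 'a set" where
  "cozero_set X h = topspace X - zero_set X h"

definition T2prime :: "'a topology \<Rightarrow> ('a \<Rightarrow> real) set" where
  "T2prime X = {f. \<exists>h. continuous_map X euclideanreal h \<and>
                     X closure_of (cozero_set X h) = topspace X \<and>
                     continuous_map (subtopology X (cozero_set X h)) euclideanreal f}"

definition nowhere_almost_P_space :: "'a topology \<Rightarrow> bool" where
  "nowhere_almost_P_space X \<longleftrightarrow> (\<forall>p \<in> topspace X. indicator {p} \<in> T2prime X)"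

definition almost_P_point :: "'a topology \<Rightarrow> 'a \<Rightarrow> bool" where
  "almost_P_point X p \<longleftrightarrow>
     (\<forall>G. gdelta_in X G \<and> p \<in> G \<longrightarrow> X interior_of G \<noteq> {})"

definition isolated_point_of :: "'a topology \<Rightarrow> 'a \<Rightarrow> bool" where
  "isolated_point_of X p \<longleftrightarrow> p \<in> topspace X \<and> openin X {p}"

end

theory Submission imports Defs begin

lemma zero_gdelta:
  assumes h: "continuous_map X euclideanreal h"
  shows "gdelta_in X {x\<in>topspace X. h x = 0}"
proof -
  have eq: "{x\<in>topspace X. h x = 0} = \<Inter> (range (\<lambda>n::nat. {x\<in>topspace X. h x \<in> {-inverse (Suc n)<..<inverse (Suc n)}}))"
  proof (rule set_eqI, rule iffI)
    fix x assume "x \<in> \<Inter> (range (\<lambda>n::nat. {x\<in>topspace X. h x \<in> {-inverse (Suc n)<..<inverse (Suc n)}}))"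
    then have x: "x \<in> topspace X" and b0: "\<And>n::nat. -inverse (Suc n) < h x \<and> h x < inverse (Suc n)" by auto
    have b: "\<bar>h x\<bar> < inverse (Suc n)" for n :: nat using b0[of n] by linarith
    show "x \<in> {x\<in>topspace X. h x = 0}"
    proof (rule ccontr)
      assume "x \<notin> {x\<in>topspace X. h x = 0}"
      with x have "\<bar>h x\<bar> > 0" by auto
      then obtain n where "inverse (Suc n) < \<bar>h x\<bar>" using reals_Archimedean by blast
      with b[of n] show False by simp
    qed
  qed auto
  have op: "openin X {x\<in>topspace X. h x \<in> {-inverse (Suc n)<..<inverse (Suc n)}}" for n::nat
    by (rule openin_continuous_map_preimage[OF h]) simp
  show ?thesis unfolding eq
    apply (rule gdelta_in_Inter)
      apply simp
     apply simp
    using op open_imp_gdelta_in by blast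
qed

lemma key_h:
  assumes cr: "completely_regular_space X" and G: "gdelta_in X G" and p: "p \<in> G"
  shows "\<exists>h. continuous_map X euclideanreal h \<and> h p = 0 \<and> {x\<in>topspace X. h x = 0} \<subseteq> G"
proof -
  from G obtain \<U> where cU: "countable \<U>" and oU: "\<And>U. U \<in> \<U> \<Longrightarrow> openin X U" and GU: "\<Inter>\<U> = G"
    and Gsub: "G \<subseteq> topspace X"
    unfolding gdelta_in_alt intersection_of_def by auto
  define \<V> where "\<V> = insert (topspace X) \<U>"
  have cV: "countable \<V>" "\<V> \<noteq> {}" using cU by (auto simp: \<V>_def)
  have oV: "\<And>U. U \<in> \<V> \<Longrightarrow> openin X U" using oU by (auto simp: \<V>_def)
  have GV: "\<Inter>\<V> = G" using GU Gsub by (auto simp: \<V>_def)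
  define u where "u = from_nat_into \<V>"
  have ru: "range u = \<V>" using range_from_nat_into[OF cV(2) cV(1)] by (simp add: u_def)
  have ou: "openin X (u n)" and pu: "p \<in> u n" for n
    using oV ru GV p by auto
  have "\<exists>f. continuous_map X (top_of_set {0..1}) f \<and> f p = 0 \<and> f ` (topspace X - u n) \<subseteq> {1::real}" for n
  proof -
    have c1: "closedin X (topspace X - u n)" using ou by auto
    have c2: "p \<in> topspace X - (topspace X - u n)" using pu openin_subset[OF ou] by auto
    have c3: "\<forall>S x. closedin X S \<and> x \<in> topspace X - S \<longrightarrow> (\<exists>f. continuous_map X (top_of_set {0..1}) f \<and> f x = 0 \<and> f ` S \<subseteq> {1::real})"
      using completely_regular_space_gen[of "0::real" 1 X] cr by (simp only: zero_less_one)
    show ?thesis using c3[rule_format, OF conjI[OF c1 c2]] .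
  qed
  then obtain f where fc: "\<And>n. continuous_map X (top_of_set {0..1}) (f n)" and fp: "\<And>n. f n p = 0"
     and f1: "\<And>n. f n ` (topspace X - u n) \<subseteq> {1::real}" by metis
  have fce: "continuous_map X euclideanreal (f n)" for n
    using fc[of n] continuous_map_in_subtopology by blast
  have f01: "x \<in> topspace X \<Longrightarrow> 0 \<le> f n x \<and> f n x \<le> 1" for n x
    using fc[of n] by (auto simp: continuous_map_def)
  define g where "g n x = f n x / 2^n" for n x
  define h where "h x = suminf (\<lambda>n. g n x)" for x
  have gb: "x \<in> topspace X \<Longrightarrow> norm (g n x) \<le> (1/2)^n" for n x
    using f01[of x n] by (auto simp: g_def power_divide divide_le_cancel)
  have sM: "summable (\<lambda>n. (1/2::real)^n)" by (simp add: summable_geometric)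
  have ul: "uniform_limit (topspace X) (\<lambda>n x. \<Sum>i<n. g i x) h sequentially"
    unfolding h_def by (rule Weierstrass_m_test[OF gb sM])
  have sg: "x \<in> topspace X \<Longrightarrow> summable (\<lambda>n. g n x)" for x
    by (rule summable_comparison_test'[OF sM]) (use gb in auto)
  have hc: "continuous_map X euclideanreal h"
  proof -
    have "continuous_map X Met_TC.mtopology h"
    proof (rule Met_TC.continuous_map_uniform_limit[where F=sequentially and f="\<lambda>n x. \<Sum>i<n. g i x"])
      show "\<forall>\<^sub>F n in sequentially. continuous_map X Met_TC.mtopology (\<lambda>x. \<Sum>i<n. g i x)"
        by (auto simp: g_def intro!: always_eventually continuous_intros fce)
      show "\<forall>\<^sub>F n in sequentially. \<forall>x\<in>topspace X. h x \<in> UNIV \<and> dist (\<Sum>i<n. g i x) (h x) < e" if "0 < e" for e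
        using uniform_limitD[OF ul that] by (simp add: dist_commute)
    qed auto
    then show ?thesis by simp
  qed
  have "h p = 0" by (simp add: h_def g_def fp)
  moreover have "{x\<in>topspace X. h x = 0} \<subseteq> G"
  proof
    fix x assume x: "x \<in> {x\<in>topspace X. h x = 0}"
    then have "\<forall>n. g n x = 0"
      using suminf_eq_zero_iff[OF sg, of x] f01 by (auto simp: h_def g_def)
    then have "\<forall>n. f n x = 0" by (simp add: g_def)
    then have "\<forall>n. x \<in> u n" using f1 x by fastforce
    then show "x \<in> G" using GV ru by auto
  qed
  ultimately show ?thesis using hc by blast
qed

lemma indicator_cont_isolated:
  assumes t1: "t1_space X" and p: "p \<in> topspace X" and o: "openin X {p}"
  shows "continuous_map X euclideanreal (indicator {p})"
proof -
  have cl: "closedin X {p}" using t1 p unfolding t1_space_closedin_singleton by blast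
  have "openin X {x \<in> topspace X. indicator {p} x \<in> U}" for U :: "real set"
  proof -
    have e: "{x \<in> topspace X. indicator {p} x \<in> U} =
      (if (1::real) \<in> U then {p} else {}) \<union> (if (0::real) \<in> U then topspace X - {p} else {})"
    proof (rule set_eqI)
      fix x show "x \<in> {x \<in> topspace X. indicator {p} x \<in> U} \<longleftrightarrow> x \<in> (if (1::real) \<in> U then {p} else {}) \<union> (if (0::real) \<in> U then topspace X - {p} else {})"
        using p by (cases "x = p") auto
    qed
    have o2: "openin X (topspace X - {p})" using cl by (simp add: closedin_def)
    show ?thesis unfolding e using o o2 by (intro openin_Un) simp_all
  qed
  then show ?thesis by (simp add: continuous_map_def)
qed


theorem theorem4p0:
  fixes X :: "'a topology"
  assumes "tychonoff_space X"
  shows "nowhere_almost_P_space X \<longleftrightarrow>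
           (\<forall>p \<in> topspace X. \<not> isolated_point_of X p \<longrightarrow> \<not> almost_P_point X p)"
proof
  assume N: "nowhere_almost_P_space X"
  show "\<forall>p \<in> topspace X. \<not> isolated_point_of X p \<longrightarrow> \<not> almost_P_point X p"
  proof (intro ballI impI)
    fix p assume p: "p \<in> topspace X" and ni: "\<not> isolated_point_of X p"
    from N p obtain h where hc: "continuous_map X euclideanreal h"
      and dense: "X closure_of (cozero_set X h) = topspace X"
      and fc: "continuous_map (subtopology X (cozero_set X h)) euclideanreal (indicator {p})"
      unfolding nowhere_almost_P_space_def T2prime_def by blast
    define C where "C = cozero_set X h"
    have Ceq: "C = {x \<in> topspace X. h x \<in> - {0}}"
      by (auto simp: C_def cozero_set_def zero_set_def)
    have Co: "openin X C" unfolding Ceq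
      by (rule openin_continuous_map_preimage[OF hc]) auto
    have pC: "p \<notin> C"
    proof
      assume pC: "p \<in> C"
      have "openin (subtopology X C) {x \<in> topspace (subtopology X C). indicator {p} x \<in> ({1/2<..} :: real set)}"
        by (rule openin_continuous_map_preimage[OF fc[folded C_def]]) auto
      moreover have "{x \<in> topspace (subtopology X C). indicator {p} x \<in> ({1/2<..} :: real set)} = {p}"
        using pC p by (auto simp: indicator_def)
      ultimately have "openin (subtopology X C) {p}" by simp
      then have "openin X {p}" by (rule openin_trans_full[OF _ Co])
      with ni p show False by (simp add: isolated_point_of_def)
    qed
    define Z where "Z = zero_set X h"
    have Zg: "gdelta_in X Z" using zero_gdelta[OF hc] by (simp add: Z_def zero_set_def)
    have pZ: "p \<in> Z" using pC p by (auto simp: Z_def C_def cozero_set_def zero_set_def)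
    have "X interior_of Z = {}"
    proof -
      have ZC: "Z \<inter> C = {}" by (auto simp: Z_def C_def cozero_set_def)
      have "X interior_of Z \<inter> C = {}" using interior_of_subset[of X Z] ZC by auto
      then have "X interior_of Z \<inter> X closure_of C = {}"
        by (simp add: openin_Int_closure_of_eq_empty[OF openin_interior_of])
      then show ?thesis using dense interior_of_subset_topspace[of X Z] by (simp add: C_def Int_absorb2)
    qed
    then show "\<not> almost_P_point X p" using Zg pZ unfolding almost_P_point_def by blast
  qed
next
  assume R: "\<forall>p \<in> topspace X. \<not> isolated_point_of X p \<longrightarrow> \<not> almost_P_point X p"
  have cr: "completely_regular_space X" and t1: "t1_space X"
    using assms by (auto simp: tychonoff_space_def Hausdorff_imp_t1_space)
  show "nowhere_almost_P_space X"
    unfolding nowhere_almost_P_space_def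
  proof
    fix p assume p: "p \<in> topspace X"
    show "indicator {p} \<in> T2prime X"
    proof (cases "isolated_point_of X p")
      case True
      have cz: "cozero_set X (\<lambda>_. 1) = topspace X"
        by (auto simp: cozero_set_def zero_set_def)
      show ?thesis unfolding T2prime_def
        apply (rule CollectI, rule exI[of _ "\<lambda>_. 1"])
        using indicator_cont_isolated[OF t1 p] True
        by (simp add: cz isolated_point_of_def)
    next
      case False
      with R p have "\<not> almost_P_point X p" by blast
      then obtain G where G: "gdelta_in X G" "p \<in> G" "X interior_of G = {}"
        unfolding almost_P_point_def by blast
      obtain h where hc: "continuous_map X euclideanreal h" and hp: "h p = 0"
        and hZ: "{x\<in>topspace X. h x = 0} \<subseteq> G"
        using key_h[OF cr G(1,2)] by blast
      have Zeq: "zero_set X h = {x\<in>topspace X. h x = 0}" by (simp add: zero_set_def)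
      have "X interior_of (zero_set X h) = {}"
        using interior_of_mono[OF hZ] G(3) by (auto simp: Zeq)
      then have d: "X closure_of (cozero_set X h) = topspace X"
        by (simp add: cozero_set_def closure_of_complement)
      have "continuous_map (subtopology X (cozero_set X h)) euclideanreal (indicator {p})"
      proof (rule continuous_map_eq[of _ _ "\<lambda>_. 0"])
        show "continuous_map (subtopology X (cozero_set X h)) euclideanreal (\<lambda>_. 0)" by simp
        fix x assume "x \<in> topspace (subtopology X (cozero_set X h))"
        then have "x \<noteq> p" using hp by (auto simp: cozero_set_def zero_set_def)
        then show "0 = indicator {p} x" by simp
      qed
      then show ?thesis unfolding T2prime_def using hc d by blast
    qed
  qed
qed

end
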